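(* Let $G$ be a finite simple graph and let $2\leq k\leq\operatorname{mat}(G)$. If $M$ is a $k$-admissable matching of $G$, then either $M$ is a $(k-1)$-admissable matching, or there exists an edge $e\in M$ such that $M\setminus\{e\}$ is a $(k-1)$-admissable matching. Consequently, $\operatorname{aim}(G,k)\leq\operatorname{aim}(G,k-1)+1$.
   Context: $\operatorname{mat}(G)$ is the matching number. Two edges form a gap if they are disjoint and no edge of $G$ joins a vertex of one to a vertex of the other. A sequence $(a_1,\dots,a_n)$ of integers is $k$-admissable if $a_i\ge1$ and $\sum a_i\le n+k-1$. For $1\le k\le\operatorname{mat}(G)$, a matching $M$ is $k$-admissable if there are nonempty pairwise disjoint $M_1,\dots,M_r\subseteq M$ with union $M$ such that edges from different $M_i$'s always form a gap in $G$, $(|M_1|,\dots,|M_r|)$ is $k$-admissable, and the induced subgraph of $G$ on $\bigcup_{e\in M_i}e$ is a forest for each $i$. $\operatorname{aim}(G,k)$ is the maximum size of a $k$-admissable matching ($0$ if none). *)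

theory Defs
  imports Main
begin

definition simple_graph :: "'a set \<Rightarrow> 'a set set \<Rightarrow> bool" where
  "simple_graph V E \<longleftrightarrow> finite V \<and> (\<forall>e\<in>E. e \<subseteq> V \<and> card e = 2)"

definition matching :: "'a set set \<Rightarrow> 'a set set \<Rightarrow> bool" where
  "matching E M \<longleftrightarrow> M \<subseteq> E \<and> (\<forall>e\<in>M. \<forall>f\<in>M. e \<noteq> f \<longrightarrow> e \<inter> f = {})"

definition mat :: "'a set set \<Rightarrow> nat" where
  "mat E = Max {card M | M. matching E M}"

definition gap :: "'a set set \<Rightarrow> 'a set \<Rightarrow> 'a set \<Rightarrow> bool" where
  "gap E e f \<longleftrightarrow> e \<inter> f = {} \<and> (\<forall>x\<in>e. \<forall>y\<in>f. {x, y} \<notin> E)"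

definition induced_forest :: "'a set set \<Rightarrow> 'a set \<Rightarrow> bool" where
  "induced_forest E S \<longleftrightarrow>
     \<not> (\<exists>vs. length vs \<ge> 3 \<and> distinct vs \<and> set vs \<subseteq> S \<and>
           (\<forall>i < length vs. {vs ! i, vs ! ((i + 1) mod length vs)} \<in> E))"

definition k_admissable_seq :: "nat \<Rightarrow> nat list \<Rightarrow> bool" where
  "k_admissable_seq k as \<longleftrightarrow>
     (\<forall>a\<in>set as. a \<ge> 1) \<and> int (sum_list as) \<le> int (length as) + int k - 1"

definition k_admissable_matching :: "'a set set \<Rightarrow> nat \<Rightarrow> 'a set set \<Rightarrow> bool" where
  "k_admissable_matching E k M \<longleftrightarrow> matching E M \<and>
     (\<exists>Ms :: 'a set set list.
        (\<forall>i < length Ms. Ms ! i \<noteq> {}) \<and>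
        (\<forall>i < length Ms. \<forall>j < length Ms. i \<noteq> j \<longrightarrow> Ms ! i \<inter> Ms ! j = {}) \<and>
        \<Union> (set Ms) = M \<and>
        (\<forall>i < length Ms. \<forall>j < length Ms. i \<noteq> j \<longrightarrow>
            (\<forall>e\<in>Ms ! i. \<forall>f\<in>Ms ! j. gap E e f)) \<and>
        k_admissable_seq k (map card Ms) \<and>
        (\<forall>i < length Ms. induced_forest E (\<Union> (Ms ! i))))"

definition aim :: "'a set set \<Rightarrow> nat \<Rightarrow> nat" where
  "aim E k = Max (insert 0 {card M | M. k_admissable_matching E k M})"

end

theory Submission
  imports Defs
begin

lemma induced_forest_mono:
  "induced_forest E S \<Longrightarrow> T \<subseteq> S \<Longrightarrow> induced_forest E T"
  unfolding induced_forest_def by blast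

lemma sum_list_le_len:
  "(\<forall>x\<in>set xs. (f x::nat) \<le> 1) \<Longrightarrow> sum_list (map f xs) \<le> length xs"
  by (induction xs) auto

lemma matching_mono: "matching E M \<Longrightarrow> N \<subseteq> M \<Longrightarrow> matching E N"
  unfolding matching_def by blast

lemma step:
  assumes k2: "2 \<le> k" and adm: "k_admissable_matching E k M"
  shows "k_admissable_matching E (k - 1) M \<or>
            (\<exists>e\<in>M. k_admissable_matching E (k - 1) (M - {e}))"
proof -
  from adm have mM: "matching E M" unfolding k_admissable_matching_def by blast
  from adm obtain Ms :: "'a set set list" where
    ne: "\<forall>i < length Ms. Ms ! i \<noteq> {}" and
    dj: "\<forall>i < length Ms. \<forall>j < length Ms. i \<noteq> j \<longrightarrow> Ms ! i \<inter> Ms ! j = {}" and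
    un: "\<Union> (set Ms) = M" and
    gp: "\<forall>i < length Ms. \<forall>j < length Ms. i \<noteq> j \<longrightarrow>
            (\<forall>e\<in>Ms ! i. \<forall>f\<in>Ms ! j. gap E e f)" and
    sq: "k_admissable_seq k (map card Ms)" and
    fo: "\<forall>i < length Ms. induced_forest E (\<Union> (Ms ! i))"
    unfolding k_admissable_matching_def by blast
  have ge1: "\<forall>x\<in>set Ms. card x \<ge> 1" using sq unfolding k_admissable_seq_def by auto
  have sumle: "int (sum_list (map card Ms)) \<le> int (length Ms) + int k - 1"
    using sq unfolding k_admissable_seq_def by auto
  have ik: "int (k - 1) = int k - 1" using k2 by auto
  show ?thesis
  proof (cases "int (sum_list (map card Ms)) \<le> int (length Ms) + int (k - 1) - 1")
    case True
    have "k_admissable_seq (k - 1) (map card Ms)"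
      using True ge1 unfolding k_admissable_seq_def by auto
    then have "k_admissable_matching E (k - 1) M"
      unfolding k_admissable_matching_def using mM ne dj un gp fo by blast
    then show ?thesis by blast
  next
    case False
    have "\<exists>x\<in>set Ms. card x \<ge> 2"
    proof (rule ccontr)
      assume "\<not> ?thesis"
      then have "\<forall>x\<in>set Ms. card x \<le> 1" by auto
      then have "sum_list (map card Ms) \<le> length Ms" by (rule sum_list_le_len)
      then show False using False ik k2 by linarith
    qed
    then obtain i where i: "i < length Ms" and c2: "card (Ms ! i) \<ge> 2"
      by (metis in_set_conv_nth)
    have fin: "finite (Ms ! i)" using c2 card.infinite by fastforce
    from c2 obtain e where e: "e \<in> Ms ! i"
      by (metis card.empty ex_in_conv not_numeral_le_zero)
    define Ms' where "Ms' = Ms[i := Ms ! i - {e}]"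
    have len: "length Ms' = length Ms" unfolding Ms'_def by simp
    have nth': "\<And>j. j < length Ms \<Longrightarrow> Ms' ! j = (if j = i then Ms ! i - {e} else Ms ! j)"
      unfolding Ms'_def by auto
    have sub: "\<And>j. j < length Ms \<Longrightarrow> Ms' ! j \<subseteq> Ms ! j" using nth' by auto
    have cd: "card (Ms ! i - {e}) = card (Ms ! i) - 1" using fin e by simp
    have ne': "\<forall>j < length Ms'. Ms' ! j \<noteq> {}"
    proof (intro allI impI)
      fix j assume j: "j < length Ms'"
      show "Ms' ! j \<noteq> {}"
      proof (cases "j = i")
        case True
        then have "card (Ms' ! j) \<ge> 1" using nth' j len cd c2 by simp
        then show ?thesis by (metis card.empty not_one_le_zero)
      next
        case False
        then show ?thesis using nth' j len ne by auto
      qed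
    qed
    have dj': "\<forall>a < length Ms'. \<forall>b < length Ms'. a \<noteq> b \<longrightarrow> Ms' ! a \<inter> Ms' ! b = {}"
    proof (intro allI impI)
      fix a b assume a: "a < length Ms'" and b: "b < length Ms'" and ab: "a \<noteq> b"
      have "Ms ! a \<inter> Ms ! b = {}" using dj a b ab len by simp
      then show "Ms' ! a \<inter> Ms' ! b = {}" using sub[of a] sub[of b] a b len by auto
    qed
    have gp': "\<forall>a < length Ms'. \<forall>b < length Ms'. a \<noteq> b \<longrightarrow>
            (\<forall>x\<in>Ms' ! a. \<forall>y\<in>Ms' ! b. gap E x y)"
    proof (intro allI impI ballI)
      fix a b x y assume a: "a < length Ms'" and b: "b < length Ms'" and ab: "a \<noteq> b"
        and x: "x \<in> Ms' ! a" and y: "y \<in> Ms' ! b"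
      have "x \<in> Ms ! a" "y \<in> Ms ! b" using sub[of a] sub[of b] a b len x y by auto
      then show "gap E x y" using gp a b ab len by simp
    qed
    have fo': "\<forall>a < length Ms'. induced_forest E (\<Union> (Ms' ! a))"
      proof (intro allI impI)
      fix a assume a: "a < length Ms'"
      have "\<Union> (Ms' ! a) \<subseteq> \<Union> (Ms ! a)" using sub[of a] a len by (intro Union_mono) simp
      then show "induced_forest E (\<Union> (Ms' ! a))"
        using fo a len induced_forest_mono by metis
    qed
    have un': "\<Union> (set Ms') = M - {e}"
    proof
      show "\<Union> (set Ms') \<subseteq> M - {e}"
      proof
        fix x assume "x \<in> \<Union> (set Ms')"
        then obtain j where j: "j < length Ms" and xj: "x \<in> Ms' ! j"
          by (metis UnionE in_set_conv_nth len)
        have "x \<in> M" using sub[OF j] xj un j by (metis UnionI nth_mem subsetD)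
        moreover have "x \<noteq> e"
        proof
          assume xe: "x = e"
          show False
          proof (cases "j = i")
            case True then show False using xj xe nth' j by auto
          next
            case False
            then have "x \<in> Ms ! j" using xj nth' j by auto
            then show False using dj j i False e xe by blast
          qed
        qed
        ultimately show "x \<in> M - {e}" by blast
      qed
    next
      show "M - {e} \<subseteq> \<Union> (set Ms')"
      proof
        fix x assume x: "x \<in> M - {e}"
        then obtain j where j: "j < length Ms" and xj: "x \<in> Ms ! j"
          using un by (metis DiffD1 UnionE in_set_conv_nth)
        have "x \<in> Ms' ! j" using nth' j xj x by auto
        then show "x \<in> \<Union> (set Ms')" using j len by (metis UnionI nth_mem)
      qed
    qed
    have sum': "sum_list (map card Ms') = sum_list (map card Ms) - 1"
    proof -
      have "sum_list (map card Ms') = sum_list ((map card Ms)[i := card (Ms ! i) - 1])"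
        unfolding Ms'_def map_update cd by simp
      also have "\<dots> = sum_list (map card Ms) + (card (Ms ! i) - 1) - card (Ms ! i)"
        using i by (simp add: sum_list_update)
      finally show ?thesis using c2 by simp
    qed
    have ge1': "\<forall>x\<in>set (map card Ms'). x \<ge> 1"
      proof
      fix x assume "x \<in> set (map card Ms')"
      then obtain j where j: "j < length Ms" and xj: "x = card (Ms' ! j)"
        using len by (auto simp: in_set_conv_nth)
      show "x \<ge> 1"
      proof (cases "j = i")
        case True then show ?thesis using xj nth' j cd c2 by simp
      next
        case False then show ?thesis using xj nth' j ge1 by (simp add: nth_mem)
      qed
    qed
    have "sum_list (map card Ms) \<ge> 1"
      using False ik k2 by linarith
    then have "k_admissable_seq (k - 1) (map card Ms')"
      unfolding k_admissable_seq_def using ge1' sum' len sumle ik by auto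
    moreover have "matching E (M - {e})" using mM matching_mono by blast
    ultimately have "k_admissable_matching E (k - 1) (M - {e})"
      unfolding k_admissable_matching_def using ne' dj' un' gp' fo' by blast
    moreover have "e \<in> M" using e i un by (metis UnionI nth_mem)
    ultimately show ?thesis by blast
  qed
qed

theorem lemma3p5:
  fixes V :: "'a set" and E :: "'a set set" and k :: nat
  assumes "simple_graph V E"
    and "2 \<le> k" and "k \<le> mat E"
  shows "(\<forall>M. k_admissable_matching E k M \<longrightarrow>
            k_admissable_matching E (k - 1) M \<or>
            (\<exists>e\<in>M. k_admissable_matching E (k - 1) (M - {e})))
         \<and> aim E k \<le> aim E (k - 1) + 1"
proof
  show P1: "\<forall>M. k_admissable_matching E k M \<longrightarrow>
            k_admissable_matching E (k - 1) M \<or>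
            (\<exists>e\<in>M. k_admissable_matching E (k - 1) (M - {e}))"
    using step assms(2) by blast
  have finE: "finite E" using assms(1) unfolding simple_graph_def
    by (metis Pow_iff finite_Pow_iff finite_subset subsetI)
  have bnd: "\<And>j. finite (insert 0 {card M | M. k_admissable_matching E j M})"
  proof -
    fix j
    have "{card M | M. k_admissable_matching E j M} \<subseteq> {..card E}"
      using finE unfolding k_admissable_matching_def matching_def
      by (auto intro: card_mono)
    then show "finite (insert 0 {card M | M. k_admissable_matching E j M})"
      using finite_subset by blast
  qed
  have "Max (insert 0 {card M | M. k_admissable_matching E k M}) \<le> aim E (k - 1) + 1"
  proof (rule Max.boundedI[OF bnd])
    show "insert 0 {card M |M. k_admissable_matching E k M} \<noteq> {}" by simp
  next
    fix a assume "a \<in> insert 0 {card M |M. k_admissable_matching E k M}"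
    then consider "a = 0" | M where "a = card M" "k_admissable_matching E k M" by blast
    then show "a \<le> aim E (k - 1) + 1"
    proof cases
      case 1 then show ?thesis by simp
    next
      case 2
      have "M \<subseteq> E" using 2(2) unfolding k_admissable_matching_def matching_def by simp
      then have finM: "finite M" using finE by (rule finite_subset)
      have disj: "k_admissable_matching E (k - 1) M \<or>
            (\<exists>e\<in>M. k_admissable_matching E (k - 1) (M - {e}))"
        using P1 2(2) by simp
      then consider "k_admissable_matching E (k - 1) M"
        | e where "e \<in> M" "k_admissable_matching E (k - 1) (M - {e})" by (elim disjE bexE) auto
      then show ?thesis
      proof cases
        case 1
        then have "card M \<le> aim E (k - 1)" unfolding aim_def
          by (intro Max_ge[OF bnd]) blast
        then show ?thesis using 2 by simp
      next
        case 3: 2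
        then have "card (M - {e}) \<le> aim E (k - 1)" unfolding aim_def
          by (intro Max_ge[OF bnd]) blast
        then show ?thesis using 2 3 finM by simp
      qed
    qed
  qed
  then show "aim E k \<le> aim E (k - 1) + 1" unfolding aim_def .
qed

end
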